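(* Let $\delta>0$, $T\ge2$, and suppose the step sizes are $\eta_k=\dfrac{1}{\delta\log T\log(k+3)\sqrt{k+1}}$. For $1\le t\le T$ let $u_t:=\max\{0,\lceil\log(C\sqrt t)/\log(1/\alpha)\rceil\}$ (so that $C\alpha^{u_t}\le1/\sqrt t$). Then \begin{align*} \mathbb E\Big[\sum_{k=0}^{t-1}\eta_k\langle\boldsymbol b_k,\boldsymbol\theta_k-\boldsymbol\theta^*\rangle\Big] &\le 8C\,\mathbb E\Big[d_0\ell_0\sum_{k=0}^{u_t}\frac{1}{\delta\log T\log(k+3)\sqrt{k+1}}\Big] +8\,\mathbb E\Big[\sum_{k=u_t+1}^{t-1}\frac{d_{k-u_t}\ell_{k-u_t}}{\delta\log T\log(k+3)\sqrt{k+1}\sqrt t}\Big]\\ &\quad+\frac{2}{\delta^2\log^2T}\,\mathbb E\Big[\sum_{k=0}^{u_t}\frac{\ell_k+2\phi_\infty^2d_0}{\sqrt{k+1}\log(k+3)}\sum_{i=1}^{k}\frac{\ell_{i-1}}{\log(i+2)\sqrt i}\Big]\\ &\quad+\frac{2}{\delta^2\log^2T}\,\mathbb E\Big[\sum_{k=u_t+1}^{t-1}\frac{\ell_k+2\phi_\infty^2d_{k-u_t}}{\log(k+3)\log(k-u_t+3)\sqrt{k+1}}\sum_{i=k-u_t+1}^{k}\frac{\ell_{i-1}}{\sqrt i}\Big]. \end{align*}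
   Context: Setting. $\mathcal S$ finite; $\boldsymbol P$ irreducible aperiodic with stationary distribution $\boldsymbol\pi$; $C>0,\alpha\in(0,1)$ with $\|\boldsymbol P^t(s,\cdot)-\boldsymbol\pi\|_{\mathrm{TV}}\le C\alpha^t$ for all $s,t$. Rewards $0\le r(s,s')\le r_\infty$, discount $\gamma\in(0,1)$, features $\|\boldsymbol\phi(s)\|_2\le\phi_\infty$, $\boldsymbol\theta^*$ the TD fixed point ($\bar{\boldsymbol g}(\boldsymbol\theta^* )=0$). For $o=(s,s')$, $\boldsymbol g(\boldsymbol\theta,o)=(r(s,s')+\gamma\boldsymbol\phi(s')^\top\boldsymbol\theta-\boldsymbol\phi(s)^\top\boldsymbol\theta)\boldsymbol\phi(s)$, $\bar{\boldsymbol g}(\boldsymbol\theta)=\sum_{s,s'}\pi(s)P(s,s')\boldsymbol g(\boldsymbol\theta,(s,s'))$. Trajectory $s_0,s_1,\dots$, $O_t=(s_t,s_{t+1})$, $\mathcal F_t=\sigma(O_0,\dots,O_t)$. TD(0): $\boldsymbol\theta_0=0$, $\boldsymbol\theta_{t+1}=\boldsymbol\theta_t+\eta_t\boldsymbol g(\boldsymbol\theta_t,O_t)$. Notation: $d_t=\|\boldsymbol\theta_t-\boldsymbol\theta^*\|_2$, $\ell_t=r_\infty\phi_\infty+2\phi_\infty^2\|\boldsymbol\theta_t\|_2$, $\boldsymbol b_t=\mathbb E[\boldsymbol g(\boldsymbol\theta_t,O_t)\mid\mathcal F_{t-1}]-\bar{\boldsymbol g}(\boldsymbol\theta_t)$.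 Logarithms natural; empty sums are $0$. *)

theory Defs
  imports "HOL-Analysis.Analysis"
begin

definition stochastic :: "('s::finite \<Rightarrow> 's \<Rightarrow> real) \<Rightarrow> bool" where
  "stochastic P \<longleftrightarrow> (\<forall>s s'. 0 \<le> P s s') \<and> (\<forall>s. (\<Sum>s'\<in>UNIV. P s s') = 1)"

fun mpow :: "('s::finite \<Rightarrow> 's \<Rightarrow> real) \<Rightarrow> nat \<Rightarrow> 's \<Rightarrow> 's \<Rightarrow> real" where
  "mpow P 0 = (\<lambda>s s'. if s = s' then 1 else 0)"
| "mpow P (Suc n) = (\<lambda>s s'. \<Sum>u\<in>UNIV. mpow P n s u * P u s')"

definition irreducible_chain :: "('s::finite \<Rightarrow> 's \<Rightarrow> real) \<Rightarrow> bool" where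
  "irreducible_chain P \<longleftrightarrow> (\<forall>s s'. \<exists>n. mpow P n s s' > 0)"

definition aperiodic_chain :: "('s::finite \<Rightarrow> 's \<Rightarrow> real) \<Rightarrow> bool" where
  "aperiodic_chain P \<longleftrightarrow> (\<forall>s. Gcd {n::nat. n \<ge> 1 \<and> mpow P n s s > 0} = 1)"

definition stationary_dist :: "('s::finite \<Rightarrow> 's \<Rightarrow> real) \<Rightarrow> ('s \<Rightarrow> real) \<Rightarrow> bool" where
  "stationary_dist P \<pi> \<longleftrightarrow> (\<forall>s. 0 \<le> \<pi> s) \<and> (\<Sum>s\<in>UNIV. \<pi> s) = 1 \<and>
     (\<forall>s'. (\<Sum>s\<in>UNIV. \<pi> s * P s s') = \<pi> s')"

text \<open>Total variation distance of distributions on a finite set: sup over events = half the L1 distance.\<close>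
definition tv_dist :: "('s::finite \<Rightarrow> real) \<Rightarrow> ('s \<Rightarrow> real) \<Rightarrow> real" where
  "tv_dist \<mu> \<nu> = (\<Sum>s\<in>UNIV. \<bar>\<mu> s - \<nu> s\<bar>) / 2"

definition td_g :: "('s \<Rightarrow> 's \<Rightarrow> real) \<Rightarrow> real \<Rightarrow> ('s \<Rightarrow> 'v::euclidean_space) \<Rightarrow> 'v \<Rightarrow> 's \<times> 's \<Rightarrow> 'v" where
  "td_g r \<gamma> \<phi> \<theta> o' = (case o' of (s, s') \<Rightarrow>
      (r s s' + \<gamma> * (\<phi> s' \<bullet> \<theta>) - \<phi> s \<bullet> \<theta>) *\<^sub>R \<phi> s)"

definition td_gbar :: "('s::finite \<Rightarrow> real) \<Rightarrow> ('s \<Rightarrow> 's \<Rightarrow> real) \<Rightarrow> ('s \<Rightarrow> 's \<Rightarrow> real) \<Rightarrow> real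
     \<Rightarrow> ('s \<Rightarrow> 'v::euclidean_space) \<Rightarrow> 'v \<Rightarrow> 'v" where
  "td_gbar \<pi> P r \<gamma> \<phi> \<theta> = (\<Sum>s\<in>UNIV. \<Sum>s'\<in>UNIV. (\<pi> s * P s s') *\<^sub>R td_g r \<gamma> \<phi> \<theta> (s, s'))"

text \<open>TD(0) iterates along a trajectory \<omega> (\<omega> k = s_k); O_k = (s_k, s_{k+1}).\<close>
fun td_theta :: "('s \<Rightarrow> 's \<Rightarrow> real) \<Rightarrow> real \<Rightarrow> ('s \<Rightarrow> 'v::euclidean_space) \<Rightarrow> (nat \<Rightarrow> real)
     \<Rightarrow> (nat \<Rightarrow> 's) \<Rightarrow> nat \<Rightarrow> 'v" where
  "td_theta r \<gamma> \<phi> \<eta> \<omega> 0 = 0"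
| "td_theta r \<gamma> \<phi> \<eta> \<omega> (Suc k) =
     td_theta r \<gamma> \<phi> \<eta> \<omega> k + \<eta> k *\<^sub>R td_g r \<gamma> \<phi> (td_theta r \<gamma> \<phi> \<eta> \<omega> k) (\<omega> k, \<omega> (Suc k))"

text \<open>b_k = E[g(theta_k,O_k) | F_{k-1}] - gbar(theta_k). For k \<ge> 1, F_{k-1} = sigma(s_0..s_k) and by
  the Markov property the conditional expectation is the one-step average from s_k; for k = 0,
  F_{-1} is trivial and the expectation is over s_0 ~ mu0 (theta_0 = 0 is deterministic).\<close>
definition td_bias :: "('s::finite \<Rightarrow> real) \<Rightarrow> ('s \<Rightarrow> 's \<Rightarrow> real) \<Rightarrow> ('s \<Rightarrow> real) \<Rightarrow> ('s \<Rightarrow> 's \<Rightarrow> real)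
     \<Rightarrow> real \<Rightarrow> ('s \<Rightarrow> 'v::euclidean_space) \<Rightarrow> (nat \<Rightarrow> real) \<Rightarrow> (nat \<Rightarrow> 's) \<Rightarrow> nat \<Rightarrow> 'v" where
  "td_bias \<mu>0 P \<pi> r \<gamma> \<phi> \<eta> \<omega> k =
     (if k = 0 then (\<Sum>s\<in>UNIV. \<Sum>s'\<in>UNIV. (\<mu>0 s * P s s') *\<^sub>R td_g r \<gamma> \<phi> (td_theta r \<gamma> \<phi> \<eta> \<omega> 0) (s, s'))
      else (\<Sum>s'\<in>UNIV. P (\<omega> k) s' *\<^sub>R td_g r \<gamma> \<phi> (td_theta r \<gamma> \<phi> \<eta> \<omega> k) (\<omega> k, s')))
     - td_gbar \<pi> P r \<gamma> \<phi> (td_theta r \<gamma> \<phi> \<eta> \<omega> k)"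

definition traj_exp :: "('s::finite \<Rightarrow> real) \<Rightarrow> ('s \<Rightarrow> 's \<Rightarrow> real) \<Rightarrow> nat \<Rightarrow> ((nat \<Rightarrow> 's) \<Rightarrow> real) \<Rightarrow> real" where
  "traj_exp \<mu>0 P N f =
     (\<Sum>\<omega>\<in>PiE {..N} (\<lambda>_. UNIV). (\<mu>0 (\<omega> 0) * (\<Prod>i<N. P (\<omega> i) (\<omega> (Suc i)))) * f \<omega>)"

definition stepsize :: "real \<Rightarrow> nat \<Rightarrow> nat \<Rightarrow> real" where
  "stepsize \<delta> T k = 1 / (\<delta> * ln (real T) * ln (real k + 3) * sqrt (real k + 1))"

definition mix_u :: "real \<Rightarrow> real \<Rightarrow> nat \<Rightarrow> nat" where
  "mix_u C \<alpha> t = nat (max 0 \<lceil>ln (C * sqrt (real t)) / ln (1 / \<alpha>)\<rceil>)"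

end

theory Submission
  imports Defs
begin



definition dep_on :: "nat \<Rightarrow> ((nat \<Rightarrow> 's) \<Rightarrow> 'b) \<Rightarrow> bool" where
  "dep_on k F \<longleftrightarrow> (\<forall>\<omega> \<omega>'. (\<forall>i\<le>k. \<omega> i = \<omega>' i) \<longrightarrow> F \<omega> = F \<omega>')"

lemma traj_exp_step:
  fixes G :: "(nat \<Rightarrow> 's::finite) \<Rightarrow> 's \<Rightarrow> real"
  assumes "\<And>y. dep_on k (\<lambda>\<omega>. G \<omega> y)"
  shows "traj_exp \<mu>0 P (Suc k) (\<lambda>\<omega>. G \<omega> (\<omega> (Suc k))) =
         traj_exp \<mu>0 P k (\<lambda>\<omega>. \<Sum>s\<in>UNIV. P (\<omega> k) s * G \<omega> s)"
proof -
  let ?w = "\<lambda>N (\<omega>::nat\<Rightarrow>'s). \<mu>0 (\<omega> 0) * (\<Prod>i<N. P (\<omega> i) (\<omega> (Suc i)))"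
  have ins: "{..Suc k} = insert (Suc k) {..k}" by auto
  have inj: "inj_on (\<lambda>(y, g). g(Suc k := y)) ((\<lambda>_. UNIV) (Suc k) \<times> Pi\<^sub>E {..k} (\<lambda>_. (UNIV::'s set)))"
    by (rule inj_combinator) auto
  have "traj_exp \<mu>0 P (Suc k) (\<lambda>\<omega>. G \<omega> (\<omega> (Suc k))) =
     (\<Sum>\<omega>\<in>(\<lambda>(y, g). g(Suc k := y)) ` (UNIV \<times> Pi\<^sub>E {..k} (\<lambda>_. UNIV)). ?w (Suc k) \<omega> * G \<omega> (\<omega> (Suc k)))"
    unfolding traj_exp_def ins PiE_insert_eq by simp
  also have "\<dots> = (\<Sum>(y,g)\<in>UNIV \<times> Pi\<^sub>E {..k} (\<lambda>_. UNIV). ?w (Suc k) (g(Suc k := y)) * G (g(Suc k := y)) y)"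
    by (subst sum.reindex[OF inj]) (simp_all add: case_prod_unfold)
  also have "\<dots> = (\<Sum>y\<in>UNIV. \<Sum>g\<in>Pi\<^sub>E {..k} (\<lambda>_. UNIV). ?w k g * (P (g k) y * G g y))"
  proof -
    have e: "?w (Suc k) (g(Suc k := y)) * G (g(Suc k := y)) y = ?w k g * (P (g k) y * G g y)" for g y
    proof -
      have "G (g(Suc k := y)) y = G g y"
        using assms[of y] unfolding dep_on_def by auto
      moreover have "(\<Prod>i<Suc k. P ((g(Suc k := y)) i) ((g(Suc k := y)) (Suc i))) =
            (\<Prod>i<k. P (g i) (g (Suc i))) * P (g k) y"
        by (simp add: prod.lessThan_Suc)
      ultimately show ?thesis by simp
    qed
    show ?thesis unfolding sum.cartesian_product[symmetric] split_conv
      by (intro sum.cong refl) (rule e)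
  qed
  also have "\<dots> = (\<Sum>g\<in>Pi\<^sub>E {..k} (\<lambda>_. UNIV). ?w k g * (\<Sum>s\<in>UNIV. P (g k) s * G g s))"
    by (subst sum.swap) (simp add: sum_distrib_left)
  finally show ?thesis unfolding traj_exp_def .
qed

lemma dep_on_mono: "dep_on j F \<Longrightarrow> j \<le> k \<Longrightarrow> dep_on k F"
  unfolding dep_on_def by auto

lemma mpow_sum1: "stochastic P \<Longrightarrow> (\<Sum>s\<in>UNIV. mpow P n x s) = 1"
proof (induction n)
  case 0 then show ?case by simp
next
  case (Suc n)
  have "(\<Sum>s\<in>UNIV. mpow P (Suc n) x s) = (\<Sum>u\<in>UNIV. mpow P n x u * (\<Sum>s\<in>UNIV. P u s))"
    by (simp add: sum_distrib_left) (rule sum.swap)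
  also have "\<dots> = 1" using Suc by (simp add: stochastic_def)
  finally show ?case .
qed

lemma mpow_nonneg: "stochastic P \<Longrightarrow> 0 \<le> mpow P n x s"
  by (induction n arbitrary: s) (auto simp: stochastic_def intro!: sum_nonneg)

lemma traj_exp_marg:
  assumes "stochastic P" "dep_on k f" "k \<le> N"
  shows "traj_exp \<mu>0 P N f = traj_exp \<mu>0 P k f"
  using assms(3)
proof (induction N)
  case 0 then show ?case by simp
next
  case (Suc N)
  show ?case
  proof (cases "k = Suc N")
    case False
    then have kN: "k \<le> N" using Suc.prems by simp
    have "traj_exp \<mu>0 P (Suc N) f = traj_exp \<mu>0 P N (\<lambda>\<omega>. \<Sum>s\<in>UNIV. P (\<omega> N) s * f \<omega>)"
      using traj_exp_step[of N "\<lambda>\<omega> y. f \<omega>" \<mu>0 P] dep_on_mono[OF assms(2) kN] by simp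
    also have "\<dots> = traj_exp \<mu>0 P N f"
      using assms(1) by (simp add: sum_distrib_right[symmetric] stochastic_def)
    finally show ?thesis using Suc.IH kN by simp
  qed simp
qed

lemma mpow0_sum: "(\<Sum>s\<in>UNIV. mpow P 0 x s * F s) = (F x :: real)"
proof -
  have "mpow P 0 x s * F s = (if x = s then F s else 0)" for s by simp
  then show ?thesis by simp
qed

lemma mpow_Suc_sum:
  "(\<Sum>x\<in>UNIV. mpow P n y x * (\<Sum>s\<in>UNIV. P x s * F s)) = (\<Sum>s\<in>UNIV. mpow P (Suc n) y s * (F s::real))"
proof -
  have "(\<Sum>x\<in>UNIV. mpow P n y x * (\<Sum>s\<in>UNIV. P x s * F s)) = (\<Sum>x\<in>UNIV. \<Sum>s\<in>UNIV. mpow P n y x * P x s * F s)"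
    by (simp add: sum_distrib_left mult.assoc)
  also have "\<dots> = (\<Sum>s\<in>UNIV. \<Sum>x\<in>UNIV. mpow P n y x * P x s * F s)" by (rule sum.swap)
  also have "\<dots> = (\<Sum>s\<in>UNIV. mpow P (Suc n) y s * F s)"
    by (simp add: sum_distrib_right)
  finally show ?thesis .
qed

lemma traj_exp_markov0:
  fixes F :: "(nat \<Rightarrow> 's::finite) \<Rightarrow> 's \<Rightarrow> real"
  assumes "stochastic P" "\<And>y. dep_on j (\<lambda>\<omega>. F \<omega> y)" "j \<le> k"
  shows "traj_exp \<mu>0 P k (\<lambda>\<omega>. F \<omega> (\<omega> k)) =
         traj_exp \<mu>0 P j (\<lambda>\<omega>. \<Sum>s\<in>UNIV. mpow P (k - j) (\<omega> j) s * F \<omega> s)"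
  using assms(3) assms(2)
proof (induction k arbitrary: F)
  case 0
  then have "j = 0" by simp
  then show ?case by (simp only: mpow0_sum diff_self_eq_0)
next
  case (Suc k)
  show ?case
  proof (cases "j = Suc k")
    case True
    then show ?thesis by (simp only: mpow0_sum diff_self_eq_0)
  next
    case False
    then have jk: "j \<le> k" using Suc.prems by simp
    have "traj_exp \<mu>0 P (Suc k) (\<lambda>\<omega>. F \<omega> (\<omega> (Suc k))) =
          traj_exp \<mu>0 P k (\<lambda>\<omega>. \<Sum>s\<in>UNIV. P (\<omega> k) s * F \<omega> s)"
      by (rule traj_exp_step) (rule dep_on_mono[OF Suc.prems(2) jk])
    also have "\<dots> = traj_exp \<mu>0 P j (\<lambda>\<omega>. \<Sum>x\<in>UNIV. mpow P (k - j) (\<omega> j) x * (\<Sum>s\<in>UNIV. P x s * F \<omega> s))"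
    proof (rule Suc.IH[OF jk, of "\<lambda>\<omega> x. \<Sum>s\<in>UNIV. P x s * F \<omega> s"])
      fix y
      show "dep_on j (\<lambda>\<omega>. \<Sum>s\<in>UNIV. P y s * F \<omega> s)"
        using Suc.prems(2) unfolding dep_on_def by (intro allI impI sum.cong refl) (metis (no_types))
    qed
    also have "\<dots> = traj_exp \<mu>0 P j (\<lambda>\<omega>. \<Sum>s\<in>UNIV. mpow P (Suc k - j) (\<omega> j) s * F \<omega> s)"
    proof -
      have "Suc k - j = Suc (k - j)" using jk by simp
      then show ?thesis by (simp only: mpow_Suc_sum)
    qed
    finally show ?thesis .
  qed
qed

lemma traj_exp_markov:
  fixes F :: "(nat \<Rightarrow> 's::finite) \<Rightarrow> 's \<Rightarrow> real"
  assumes "stochastic P" "\<And>y. dep_on j (\<lambda>\<omega>. F \<omega> y)" "j \<le> k" "k \<le> N"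
  shows "traj_exp \<mu>0 P N (\<lambda>\<omega>. F \<omega> (\<omega> k)) =
         traj_exp \<mu>0 P N (\<lambda>\<omega>. \<Sum>s\<in>UNIV. mpow P (k - j) (\<omega> j) s * F \<omega> s)"
proof -
  have d1: "dep_on k (\<lambda>\<omega>. F \<omega> (\<omega> k))"
    using assms(2,3) unfolding dep_on_def by (metis (no_types) order_refl order_trans)
  have d2: "dep_on j (\<lambda>\<omega>. \<Sum>s\<in>UNIV. mpow P (k - j) (\<omega> j) s * F \<omega> s)"
    using assms(2) unfolding dep_on_def by (intro allI impI sum.cong refl) (metis (no_types) order_refl)
  show ?thesis
    using traj_exp_marg[OF assms(1) d1 assms(4)] traj_exp_marg[OF assms(1) d2, of N] assms(3,4)
      traj_exp_markov0[OF assms(1,2,3)] by simp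
qed

lemma traj_exp_add: "traj_exp \<mu>0 P N (\<lambda>\<omega>. f \<omega> + g \<omega>) = traj_exp \<mu>0 P N f + traj_exp \<mu>0 P N g"
  unfolding traj_exp_def by (simp add: distrib_left sum.distrib)

lemma traj_exp_cmult: "traj_exp \<mu>0 P N (\<lambda>\<omega>. c * f \<omega>) = c * traj_exp \<mu>0 P N f"
  unfolding traj_exp_def by (simp add: sum_distrib_left mult.left_commute)

lemma traj_exp_sum: "finite K \<Longrightarrow> traj_exp \<mu>0 P N (\<lambda>\<omega>. \<Sum>k\<in>K. f k \<omega>) = (\<Sum>k\<in>K. traj_exp \<mu>0 P N (f k))"
  unfolding traj_exp_def by (simp add: sum_distrib_left) (rule sum.swap)

lemma traj_exp_mono:
  assumes "stochastic P" "\<forall>s. 0 \<le> \<mu>0 s" "\<And>\<omega>. f \<omega> \<le> g \<omega>"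
  shows "traj_exp \<mu>0 P N f \<le> traj_exp \<mu>0 P N g"
  unfolding traj_exp_def
proof (rule sum_mono)
  fix \<omega> :: "nat \<Rightarrow> 'a"
  have "0 \<le> \<mu>0 (\<omega> 0) * (\<Prod>i<N. P (\<omega> i) (\<omega> (Suc i)))"
    using assms(1,2) unfolding stochastic_def by (intro mult_nonneg_nonneg prod_nonneg) auto
  then show "\<mu>0 (\<omega> 0) * (\<Prod>i<N. P (\<omega> i) (\<omega> (Suc i))) * f \<omega> \<le> \<mu>0 (\<omega> 0) * (\<Prod>i<N. P (\<omega> i) (\<omega> (Suc i))) * g \<omega>"
    using assms(3) by (intro mult_left_mono) auto
qed




locale tdset =
  fixes P :: "'s::finite \<Rightarrow> 's \<Rightarrow> real" and \<pi> :: "'s \<Rightarrow> real"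
    and r :: "'s \<Rightarrow> 's \<Rightarrow> real" and \<gamma> r_inf phi_inf C \<alpha> :: real
    and \<phi> :: "'s \<Rightarrow> 'v::euclidean_space"
  assumes stoch: "stochastic P" and stat: "stationary_dist P \<pi>"
    and rb: "\<forall>s s'. 0 \<le> r s s' \<and> r s s' \<le> r_inf"
    and gam0: "0 < \<gamma>" and gam1: "\<gamma> < 1"
    and phib: "\<forall>s. norm (\<phi> s) \<le> phi_inf"
    and mix: "\<forall>s n. tv_dist (mpow P n s) \<pi> \<le> C * \<alpha> ^ n"
begin

definition L :: "'v \<Rightarrow> real" where "L \<theta> = r_inf * phi_inf + 2 * phi_inf\<^sup>2 * norm \<theta>"
definition hh :: "'v \<Rightarrow> 's \<Rightarrow> 'v" where "hh \<theta> x = (\<Sum>s'\<in>UNIV. P x s' *\<^sub>R td_g r \<gamma> \<phi> \<theta> (x, s'))"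
definition BB :: "'v \<Rightarrow> 's \<Rightarrow> 'v" where "BB \<theta> x = hh \<theta> x - td_gbar \<pi> P r \<gamma> \<phi> \<theta>"

lemma phi_nn: "0 \<le> phi_inf"
  using phib norm_ge_zero order_trans by blast

lemma rinf_nn: "0 \<le> r_inf"
  using rb order_trans by blast

lemma L_nn: "0 \<le> L \<theta>"
  unfolding L_def using phi_nn rinf_nn by simp

lemma P_nn: "0 \<le> P s s'" using stoch by (simp add: stochastic_def)
lemma P_sum: "(\<Sum>s'\<in>UNIV. P s s') = 1" using stoch by (simp add: stochastic_def)
lemma pi_nn: "0 \<le> \<pi> s" using stat by (simp add: stationary_dist_def)
lemma pi_sum: "(\<Sum>s\<in>UNIV. \<pi> s) = 1" using stat by (simp add: stationary_dist_def)

lemma g_bound: "norm (td_g r \<gamma> \<phi> \<theta> (s, s')) \<le> L \<theta>"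
proof -
  have n1: "norm (\<phi> s) \<le> phi_inf" "norm (\<phi> s') \<le> phi_inf" using phib by auto
  have a1: "\<bar>\<phi> s' \<bullet> \<theta>\<bar> \<le> phi_inf * norm \<theta>"
    by (meson Cauchy_Schwarz_ineq2 n1(2) mult_right_mono norm_ge_zero order_trans)
  have a2: "\<bar>\<phi> s \<bullet> \<theta>\<bar> \<le> phi_inf * norm \<theta>"
    by (meson Cauchy_Schwarz_ineq2 n1(1) mult_right_mono norm_ge_zero order_trans)
  have a3: "\<bar>\<gamma> * (\<phi> s' \<bullet> \<theta>)\<bar> \<le> phi_inf * norm \<theta>"
  proof -
    have "\<bar>\<gamma> * (\<phi> s' \<bullet> \<theta>)\<bar> = \<gamma> * \<bar>\<phi> s' \<bullet> \<theta>\<bar>" using gam0 by (simp add: abs_mult)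
    also have "\<dots> \<le> 1 * \<bar>\<phi> s' \<bullet> \<theta>\<bar>" using gam1 by (intro mult_right_mono) auto
    finally show ?thesis using a1 by simp
  qed
  have "\<bar>r s s' + \<gamma> * (\<phi> s' \<bullet> \<theta>) - \<phi> s \<bullet> \<theta>\<bar> \<le> r_inf + 2 * phi_inf * norm \<theta>"
    using a2 a3 rb[rule_format, of s s'] by linarith
  then have "\<bar>r s s' + \<gamma> * (\<phi> s' \<bullet> \<theta>) - \<phi> s \<bullet> \<theta>\<bar> * norm (\<phi> s) \<le> (r_inf + 2 * phi_inf * norm \<theta>) * phi_inf"
    using n1(1) by (intro mult_mono) auto
  moreover have "norm (td_g r \<gamma> \<phi> \<theta> (s, s')) = \<bar>r s s' + \<gamma> * (\<phi> s' \<bullet> \<theta>) - \<phi> s \<bullet> \<theta>\<bar> * norm (\<phi> s)"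
    unfolding td_g_def by simp
  ultimately show ?thesis unfolding L_def by (simp add: algebra_simps power2_eq_square)
qed

lemma g_lip: "norm (td_g r \<gamma> \<phi> \<theta> (s, s') - td_g r \<gamma> \<phi> \<theta>' (s, s')) \<le> 2 * phi_inf\<^sup>2 * norm (\<theta> - \<theta>')"
proof -
  have n1: "norm (\<phi> s) \<le> phi_inf" "norm (\<phi> s') \<le> phi_inf" using phib by auto
  let ?x = "\<theta> - \<theta>'"
  have a1: "\<bar>\<phi> s' \<bullet> ?x\<bar> \<le> phi_inf * norm ?x"
    by (meson Cauchy_Schwarz_ineq2 n1(2) mult_right_mono norm_ge_zero order_trans)
  have a2: "\<bar>\<phi> s \<bullet> ?x\<bar> \<le> phi_inf * norm ?x"
    by (meson Cauchy_Schwarz_ineq2 n1(1) mult_right_mono norm_ge_zero order_trans)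
  have a3: "\<bar>\<gamma> * (\<phi> s' \<bullet> ?x)\<bar> \<le> phi_inf * norm ?x"
  proof -
    have "\<bar>\<gamma> * (\<phi> s' \<bullet> ?x)\<bar> = \<gamma> * \<bar>\<phi> s' \<bullet> ?x\<bar>" using gam0 by (simp add: abs_mult)
    also have "\<dots> \<le> 1 * \<bar>\<phi> s' \<bullet> ?x\<bar>" using gam1 by (intro mult_right_mono) auto
    finally show ?thesis using a1 by simp
  qed
  have "\<bar>\<gamma> * (\<phi> s' \<bullet> ?x) - \<phi> s \<bullet> ?x\<bar> \<le> 2 * phi_inf * norm ?x"
    using a2 a3 by linarith
  then have "\<bar>\<gamma> * (\<phi> s' \<bullet> ?x) - \<phi> s \<bullet> ?x\<bar> * norm (\<phi> s) \<le> (2 * phi_inf * norm ?x) * phi_inf"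
    using n1(1) by (intro mult_mono) auto
  moreover have "td_g r \<gamma> \<phi> \<theta> (s, s') - td_g r \<gamma> \<phi> \<theta>' (s, s') = (\<gamma> * (\<phi> s' \<bullet> ?x) - \<phi> s \<bullet> ?x) *\<^sub>R \<phi> s"
    unfolding td_g_def by (simp add: algebra_simps inner_diff_right)
  ultimately show ?thesis by (simp add: power2_eq_square mult_ac)
qed

lemma convex_norm_bound:
  fixes w :: "'s \<Rightarrow> real" and v :: "'s \<Rightarrow> 'v"
  assumes "\<And>s. 0 \<le> w s" "(\<Sum>s\<in>UNIV. w s) = 1" "\<And>s. norm (v s) \<le> M"
  shows "norm (\<Sum>s\<in>UNIV. w s *\<^sub>R v s) \<le> M"
proof -
  have "norm (\<Sum>s\<in>UNIV. w s *\<^sub>R v s) \<le> (\<Sum>s\<in>UNIV. norm (w s *\<^sub>R v s))" by (rule norm_sum)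
  also have "\<dots> \<le> (\<Sum>s\<in>UNIV. w s * M)"
    using assms(1,3) by (intro sum_mono) (simp add: mult_left_mono)
  also have "\<dots> = M" using assms(2) by (simp add: sum_distrib_right[symmetric])
  finally show ?thesis .
qed

lemma hh_bound: "norm (hh \<theta> x) \<le> L \<theta>"
  unfolding hh_def by (rule convex_norm_bound) (auto simp: P_nn P_sum g_bound)

lemma hh_lip: "norm (hh \<theta> x - hh \<theta>' x) \<le> 2 * phi_inf\<^sup>2 * norm (\<theta> - \<theta>')"
proof -
  have "hh \<theta> x - hh \<theta>' x = (\<Sum>s'\<in>UNIV. P x s' *\<^sub>R (td_g r \<gamma> \<phi> \<theta> (x, s') - td_g r \<gamma> \<phi> \<theta>' (x, s')))"
    unfolding hh_def by (simp add: sum_subtractf scaleR_diff_right)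
  also have "norm \<dots> \<le> 2 * phi_inf\<^sup>2 * norm (\<theta> - \<theta>')"
    by (rule convex_norm_bound) (auto simp: P_nn P_sum g_lip)
  finally show ?thesis .
qed

lemma gbar_eq: "td_gbar \<pi> P r \<gamma> \<phi> \<theta> = (\<Sum>s\<in>UNIV. \<pi> s *\<^sub>R hh \<theta> s)"
  unfolding td_gbar_def hh_def by (simp add: scaleR_sum_right)

lemma gbar_bound: "norm (td_gbar \<pi> P r \<gamma> \<phi> \<theta>) \<le> L \<theta>"
  unfolding gbar_eq by (rule convex_norm_bound) (auto simp: pi_nn pi_sum hh_bound)

lemma gbar_lip: "norm (td_gbar \<pi> P r \<gamma> \<phi> \<theta> - td_gbar \<pi> P r \<gamma> \<phi> \<theta>') \<le> 2 * phi_inf\<^sup>2 * norm (\<theta> - \<theta>')"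
proof -
  have "td_gbar \<pi> P r \<gamma> \<phi> \<theta> - td_gbar \<pi> P r \<gamma> \<phi> \<theta>' = (\<Sum>s\<in>UNIV. \<pi> s *\<^sub>R (hh \<theta> s - hh \<theta>' s))"
    unfolding gbar_eq by (simp add: sum_subtractf scaleR_diff_right)
  also have "norm \<dots> \<le> 2 * phi_inf\<^sup>2 * norm (\<theta> - \<theta>')"
    by (rule convex_norm_bound) (auto simp: pi_nn pi_sum hh_lip)
  finally show ?thesis .
qed

lemma BB_bound: "norm (BB \<theta> x) \<le> 2 * L \<theta>"
proof -
  have "norm (BB \<theta> x) \<le> norm (hh \<theta> x) + norm (td_gbar \<pi> P r \<gamma> \<phi> \<theta>)"
    unfolding BB_def by (rule norm_triangle_ineq4)
  then show ?thesis using hh_bound[of \<theta> x] gbar_bound[of \<theta>] by linarith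
qed

lemma BB_lip: "norm (BB \<theta> x - BB \<theta>' x) \<le> 4 * phi_inf\<^sup>2 * norm (\<theta> - \<theta>')"
proof -
  have "BB \<theta> x - BB \<theta>' x = (hh \<theta> x - hh \<theta>' x) - (td_gbar \<pi> P r \<gamma> \<phi> \<theta> - td_gbar \<pi> P r \<gamma> \<phi> \<theta>')"
    unfolding BB_def by simp
  then have "norm (BB \<theta> x - BB \<theta>' x) \<le> norm (hh \<theta> x - hh \<theta>' x) + norm (td_gbar \<pi> P r \<gamma> \<phi> \<theta> - td_gbar \<pi> P r \<gamma> \<phi> \<theta>')"
    by (simp only: norm_triangle_ineq4)
  then show ?thesis using hh_lip[of \<theta> x \<theta>'] gbar_lip[of \<theta> \<theta>'] by linarith
qed

lemma mix_bound: "norm (\<Sum>s\<in>UNIV. mpow P m y s *\<^sub>R BB \<theta> s) \<le> 2 * C * \<alpha> ^ m * L \<theta>"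
proof -
  have "(\<Sum>s\<in>UNIV. mpow P m y s *\<^sub>R BB \<theta> s) =
        (\<Sum>s\<in>UNIV. mpow P m y s *\<^sub>R hh \<theta> s) - (\<Sum>s\<in>UNIV. mpow P m y s) *\<^sub>R td_gbar \<pi> P r \<gamma> \<phi> \<theta>"
    unfolding BB_def by (simp add: scaleR_diff_right sum_subtractf scaleR_sum_left)
  also have "\<dots> = (\<Sum>s\<in>UNIV. (mpow P m y s - \<pi> s) *\<^sub>R hh \<theta> s)"
    unfolding mpow_sum1[OF stoch] gbar_eq by (simp add: scaleR_diff_left sum_subtractf)
  finally have e: "(\<Sum>s\<in>UNIV. mpow P m y s *\<^sub>R BB \<theta> s) = (\<Sum>s\<in>UNIV. (mpow P m y s - \<pi> s) *\<^sub>R hh \<theta> s)" .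
  have "norm (\<Sum>s\<in>UNIV. (mpow P m y s - \<pi> s) *\<^sub>R hh \<theta> s) \<le> (\<Sum>s\<in>UNIV. norm ((mpow P m y s - \<pi> s) *\<^sub>R hh \<theta> s))"
    by (rule norm_sum)
  also have "\<dots> \<le> (\<Sum>s\<in>UNIV. \<bar>mpow P m y s - \<pi> s\<bar> * L \<theta>)"
    by (intro sum_mono) (simp add: hh_bound mult_left_mono)
  also have "\<dots> = 2 * tv_dist (mpow P m y) \<pi> * L \<theta>"
    unfolding tv_dist_def by (simp add: sum_distrib_right)
  also have "\<dots> \<le> 2 * (C * \<alpha> ^ m) * L \<theta>"
    using mix L_nn by (intro mult_right_mono) auto
  finally show ?thesis using e by simp
qed

end




context tdset begin

abbreviation th :: "(nat \<Rightarrow> real) \<Rightarrow> (nat \<Rightarrow> 's) \<Rightarrow> nat \<Rightarrow> 'v" where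
  "th \<eta> \<omega> k \<equiv> td_theta r \<gamma> \<phi> \<eta> \<omega> k"

lemma th_dep: "dep_on k (\<lambda>\<omega>. th \<eta> \<omega> k)"
proof (induction k)
  case 0 then show ?case by (simp add: dep_on_def)
next
  case (Suc k)
  show ?case unfolding dep_on_def
  proof (intro allI impI)
    fix \<omega> \<omega>' :: "nat \<Rightarrow> 's"
    assume h: "\<forall>i\<le>Suc k. \<omega> i = \<omega>' i"
    then have "th \<eta> \<omega> k = th \<eta> \<omega>' k" using Suc unfolding dep_on_def by simp
    moreover have "\<omega> k = \<omega>' k" "\<omega> (Suc k) = \<omega>' (Suc k)" using h by auto
    ultimately show "th \<eta> \<omega> (Suc k) = th \<eta> \<omega>' (Suc k)" by simp
  qed
qed

lemma th_diff:
  assumes "\<And>i. 0 \<le> \<eta> i" "j \<le> k"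
  shows "norm (th \<eta> \<omega> k - th \<eta> \<omega> j) \<le> (\<Sum>i=j..<k. \<eta> i * L (th \<eta> \<omega> i))"
  using assms(2)
proof (induction k)
  case 0 then show ?case by simp
next
  case (Suc k)
  show ?case
  proof (cases "j = Suc k")
    case True then show ?thesis by simp
  next
    case False
    then have jk: "j \<le> k" using Suc.prems by simp
    have "norm (th \<eta> \<omega> (Suc k) - th \<eta> \<omega> j) \<le> norm (th \<eta> \<omega> k - th \<eta> \<omega> j) + norm (\<eta> k *\<^sub>R td_g r \<gamma> \<phi> (th \<eta> \<omega> k) (\<omega> k, \<omega> (Suc k)))"
    proof -
      have "th \<eta> \<omega> (Suc k) - th \<eta> \<omega> j = (th \<eta> \<omega> k - th \<eta> \<omega> j) + \<eta> k *\<^sub>R td_g r \<gamma> \<phi> (th \<eta> \<omega> k) (\<omega> k, \<omega> (Suc k))"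
        by simp
      then show ?thesis by (metis norm_triangle_ineq)
    qed
    also have "\<dots> \<le> (\<Sum>i=j..<k. \<eta> i * L (th \<eta> \<omega> i)) + \<eta> k * L (th \<eta> \<omega> k)"
      using Suc.IH[OF jk] g_bound assms(1)[of k] by (intro add_mono) (auto intro: mult_left_mono)
    also have "\<dots> = (\<Sum>i=j..<Suc k. \<eta> i * L (th \<eta> \<omega> i))" using jk by simp
    finally show ?thesis .
  qed
qed

lemma bias_eq: "k \<noteq> 0 \<Longrightarrow> td_bias \<mu>0 P \<pi> r \<gamma> \<phi> \<eta> \<omega> k = BB (th \<eta> \<omega> k) (\<omega> k)"
  unfolding td_bias_def BB_def hh_def by simp

lemma bias0_bound:
  assumes "\<forall>s. 0 \<le> \<mu>0 s" "(\<Sum>s\<in>UNIV. \<mu>0 s) = 1"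
  shows "norm (td_bias \<mu>0 P \<pi> r \<gamma> \<phi> \<eta> \<omega> 0) \<le> 2 * C * L 0"
proof -
  have "td_bias \<mu>0 P \<pi> r \<gamma> \<phi> \<eta> \<omega> 0 = (\<Sum>s\<in>UNIV. \<mu>0 s *\<^sub>R hh 0 s) - (\<Sum>s\<in>UNIV. \<mu>0 s) *\<^sub>R td_gbar \<pi> P r \<gamma> \<phi> 0"
    using assms(2) unfolding td_bias_def hh_def by (simp add: scaleR_sum_right)
  also have "\<dots> = (\<Sum>s\<in>UNIV. \<mu>0 s *\<^sub>R BB 0 s)"
    unfolding BB_def by (simp add: scaleR_diff_right sum_subtractf scaleR_sum_left)
  finally have e: "td_bias \<mu>0 P \<pi> r \<gamma> \<phi> \<eta> \<omega> 0 = (\<Sum>s\<in>UNIV. \<mu>0 s *\<^sub>R BB 0 s)" .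
  have m0: "(\<Sum>x\<in>UNIV. mpow P 0 s x *\<^sub>R BB 0 x) = BB 0 s" for s
  proof -
    have "mpow P 0 s x *\<^sub>R BB 0 x = (if s = x then BB 0 x else 0)" for x by simp
    then show ?thesis by simp
  qed
  have "norm (BB 0 s) \<le> 2 * C * L 0" for s
    using mix_bound[of 0 s 0] unfolding m0 by simp
  then show ?thesis unfolding e
    by (intro convex_norm_bound) (use assms in auto)
qed

lemma per_k:
  assumes eta: "\<And>i. 0 \<le> \<eta> i" and mu: "\<forall>s. 0 \<le> \<mu>0 s" "(\<Sum>s\<in>UNIV. \<mu>0 s) = 1"
    and jk: "j \<le> k" "k \<le> N" "k = 0 \<longrightarrow> j = 0"
  shows "traj_exp \<mu>0 P N (\<lambda>\<omega>. \<eta> k * (td_bias \<mu>0 P \<pi> r \<gamma> \<phi> \<eta> \<omega> k \<bullet> (th \<eta> \<omega> k - \<theta>s)))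
    \<le> traj_exp \<mu>0 P N (\<lambda>\<omega>. \<eta> k * (2 * C * \<alpha> ^ (k - j) * L (th \<eta> \<omega> j) * norm (th \<eta> \<omega> j - \<theta>s)
          + (2 * L (th \<eta> \<omega> k) + 4 * phi_inf\<^sup>2 * norm (th \<eta> \<omega> j - \<theta>s)) * (\<Sum>i=j..<k. \<eta> i * L (th \<eta> \<omega> i))))"
proof (cases "k = 0")
  case True
  then have j0: "j = 0" using jk by simp
  show ?thesis
  proof (rule traj_exp_mono[OF stoch mu(1)])
    fix \<omega> :: "nat \<Rightarrow> 's"
    have "td_bias \<mu>0 P \<pi> r \<gamma> \<phi> \<eta> \<omega> 0 \<bullet> (th \<eta> \<omega> 0 - \<theta>s) \<le> norm (td_bias \<mu>0 P \<pi> r \<gamma> \<phi> \<eta> \<omega> 0) * norm (th \<eta> \<omega> 0 - \<theta>s)"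
      by (rule norm_cauchy_schwarz)
    also have "\<dots> \<le> 2 * C * L 0 * norm (th \<eta> \<omega> 0 - \<theta>s)"
      using bias0_bound[OF mu] by (intro mult_right_mono) auto
    finally have X: "td_bias \<mu>0 P \<pi> r \<gamma> \<phi> \<eta> \<omega> 0 \<bullet> (th \<eta> \<omega> 0 - \<theta>s) \<le> 2 * C * L 0 * norm (th \<eta> \<omega> 0 - \<theta>s)" .
    have "\<eta> 0 * (td_bias \<mu>0 P \<pi> r \<gamma> \<phi> \<eta> \<omega> 0 \<bullet> (th \<eta> \<omega> 0 - \<theta>s)) \<le> \<eta> 0 * (2 * C * L 0 * norm (th \<eta> \<omega> 0 - \<theta>s))"
      using X eta[of 0] by (rule mult_left_mono)
    then show "\<eta> k * (td_bias \<mu>0 P \<pi> r \<gamma> \<phi> \<eta> \<omega> k \<bullet> (th \<eta> \<omega> k - \<theta>s))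
       \<le> \<eta> k * (2 * C * \<alpha> ^ (k - j) * L (th \<eta> \<omega> j) * norm (th \<eta> \<omega> j - \<theta>s)
          + (2 * L (th \<eta> \<omega> k) + 4 * phi_inf\<^sup>2 * norm (th \<eta> \<omega> j - \<theta>s)) * (\<Sum>i=j..<k. \<eta> i * L (th \<eta> \<omega> i)))"
      using True j0 by simp
  qed
next
  case False
  define F where "F = (\<lambda>\<omega> x. \<eta> k * (BB (th \<eta> \<omega> j) x \<bullet> (th \<eta> \<omega> j - \<theta>s)))"
  define R where "R = (\<lambda>\<omega>. \<eta> k * (td_bias \<mu>0 P \<pi> r \<gamma> \<phi> \<eta> \<omega> k \<bullet> (th \<eta> \<omega> k - \<theta>s)) - F \<omega> (\<omega> k))"
  have Fdep: "dep_on j (\<lambda>\<omega>. F \<omega> y)" for y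
    using th_dep[of j \<eta>] unfolding dep_on_def F_def by metis
  have split: "traj_exp \<mu>0 P N (\<lambda>\<omega>. \<eta> k * (td_bias \<mu>0 P \<pi> r \<gamma> \<phi> \<eta> \<omega> k \<bullet> (th \<eta> \<omega> k - \<theta>s)))
     = traj_exp \<mu>0 P N (\<lambda>\<omega>. F \<omega> (\<omega> k)) + traj_exp \<mu>0 P N R"
    unfolding traj_exp_add[symmetric] R_def by simp
  have m: "traj_exp \<mu>0 P N (\<lambda>\<omega>. F \<omega> (\<omega> k)) = traj_exp \<mu>0 P N (\<lambda>\<omega>. \<Sum>s\<in>UNIV. mpow P (k - j) (\<omega> j) s * F \<omega> s)"
    by (rule traj_exp_markov[OF stoch Fdep jk(1,2)])
  have m2: "traj_exp \<mu>0 P N (\<lambda>\<omega>. \<Sum>s\<in>UNIV. mpow P (k - j) (\<omega> j) s * F \<omega> s)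
      \<le> traj_exp \<mu>0 P N (\<lambda>\<omega>. \<eta> k * (2 * C * \<alpha> ^ (k - j) * L (th \<eta> \<omega> j) * norm (th \<eta> \<omega> j - \<theta>s)))"
  proof (rule traj_exp_mono[OF stoch mu(1)])
    fix \<omega> :: "nat \<Rightarrow> 's"
    have "(\<Sum>s\<in>UNIV. mpow P (k - j) (\<omega> j) s * F \<omega> s)
       = \<eta> k * ((\<Sum>s\<in>UNIV. mpow P (k - j) (\<omega> j) s *\<^sub>R BB (th \<eta> \<omega> j) s) \<bullet> (th \<eta> \<omega> j - \<theta>s))"
      unfolding F_def by (simp add: inner_sum_left sum_distrib_left mult.left_commute)
    also have "\<dots> \<le> \<eta> k * (norm (\<Sum>s\<in>UNIV. mpow P (k - j) (\<omega> j) s *\<^sub>R BB (th \<eta> \<omega> j) s) * norm (th \<eta> \<omega> j - \<theta>s))"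
      using eta[of k] by (intro mult_left_mono norm_cauchy_schwarz) auto
    also have "\<dots> \<le> \<eta> k * (2 * C * \<alpha> ^ (k - j) * L (th \<eta> \<omega> j) * norm (th \<eta> \<omega> j - \<theta>s))"
      using eta[of k] mix_bound by (intro mult_left_mono mult_right_mono) auto
    finally show "(\<Sum>s\<in>UNIV. mpow P (k - j) (\<omega> j) s * F \<omega> s)
      \<le> \<eta> k * (2 * C * \<alpha> ^ (k - j) * L (th \<eta> \<omega> j) * norm (th \<eta> \<omega> j - \<theta>s))" .
  qed
  have r2: "traj_exp \<mu>0 P N R \<le> traj_exp \<mu>0 P N (\<lambda>\<omega>. \<eta> k * ((2 * L (th \<eta> \<omega> k) + 4 * phi_inf\<^sup>2 * norm (th \<eta> \<omega> j - \<theta>s)) * (\<Sum>i=j..<k. \<eta> i * L (th \<eta> \<omega> i))))"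
  proof (rule traj_exp_mono[OF stoch mu(1)])
    fix \<omega> :: "nat \<Rightarrow> 's"
    let ?a = "th \<eta> \<omega> k" and ?b = "th \<eta> \<omega> j" and ?x = "\<omega> k"
    let ?S = "(\<Sum>i=j..<k. \<eta> i * L (th \<eta> \<omega> i))"
    have D: "norm (?a - ?b) \<le> ?S" by (rule th_diff[OF eta jk(1)])
    have "R \<omega> = \<eta> k * ((BB ?a ?x - BB ?b ?x) \<bullet> (?b - \<theta>s) + BB ?a ?x \<bullet> (?a - ?b))"
      unfolding R_def F_def bias_eq[OF False] by (simp add: algebra_simps inner_diff_left inner_diff_right)
    also have "\<dots> \<le> \<eta> k * (4 * phi_inf\<^sup>2 * norm (?a - ?b) * norm (?b - \<theta>s) + 2 * L ?a * norm (?a - ?b))"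
    proof (intro mult_left_mono add_mono eta)
      show "(BB ?a ?x - BB ?b ?x) \<bullet> (?b - \<theta>s) \<le> 4 * phi_inf\<^sup>2 * norm (?a - ?b) * norm (?b - \<theta>s)"
        using norm_cauchy_schwarz[of "BB ?a ?x - BB ?b ?x" "?b - \<theta>s"] BB_lip[of ?a ?x ?b]
        by (meson mult_right_mono norm_ge_zero order_trans)
      show "BB ?a ?x \<bullet> (?a - ?b) \<le> 2 * L ?a * norm (?a - ?b)"
        using norm_cauchy_schwarz[of "BB ?a ?x" "?a - ?b"] BB_bound[of ?a ?x]
        by (meson mult_right_mono norm_ge_zero order_trans)
    qed
    also have "\<dots> = \<eta> k * ((2 * L ?a + 4 * phi_inf\<^sup>2 * norm (?b - \<theta>s)) * norm (?a - ?b))"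
      by (simp add: algebra_simps)
    also have "\<dots> \<le> \<eta> k * ((2 * L ?a + 4 * phi_inf\<^sup>2 * norm (?b - \<theta>s)) * ?S)"
      using D eta[of k] L_nn by (intro mult_left_mono) auto
    finally show "R \<omega> \<le> \<eta> k * ((2 * L ?a + 4 * phi_inf\<^sup>2 * norm (?b - \<theta>s)) * ?S)" .
  qed
  show ?thesis
    unfolding split using add_mono[OF m2 r2] m
    by (simp add: traj_exp_add[symmetric] distrib_left)
qed

end



lemma sum_shift_Suc: "(\<Sum>i=Suc j..k. f i) = (\<Sum>i=j..<k. f (Suc i))"
proof -
  have "{Suc j..k} = Suc ` {j..<k}" by (simp add: atLeastLessThanSuc_atLeastAtMost[symmetric])
  then show ?thesis by (simp only: sum.reindex[of Suc, OF inj_on_subset[OF inj_Suc subset_UNIV]] o_def)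
qed

lemma stepsize_pos: "0 < \<delta> \<Longrightarrow> 2 \<le> T \<Longrightarrow> 0 < stepsize \<delta> T k"
  unfolding stepsize_def by (intro divide_pos_pos mult_pos_pos) auto

lemma eta_sum1:
  "(\<Sum>i=0..<k. stepsize \<delta> T i * l i) =
   (1 / (\<delta> * ln (real T))) * (\<Sum>i=1..k. l (i - 1) / (ln (real i + 2) * sqrt (real i)))"
proof -
  have "(\<Sum>i=1..k. l (i - 1) / (ln (real i + 2) * sqrt (real i))) =
        (\<Sum>i=0..<k. l i / (ln (real i + 3) * sqrt (real i + 1)))"
    using sum_shift_Suc[of "\<lambda>i. l (i - 1) / (ln (real i + 2) * sqrt (real i))" 0 k]
    by (simp add: add.commute add.left_commute numeral_3_eq_3 numeral_2_eq_2)
  then show ?thesis unfolding stepsize_def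
    by (simp add: sum_distrib_left mult.assoc)
qed

lemma grp1:
  fixes l :: "nat \<Rightarrow> real"
  assumes "0 < \<delta>" "2 \<le> T" "\<And>i. 0 \<le> l i" "0 \<le> d0" "0 < C" "0 \<le> a" "a \<le> 1" "0 \<le> p2"
  shows "stepsize \<delta> T k * (2 * C * a * l 0 * d0 + (2 * l k + 4 * p2 * d0) * (\<Sum>i=0..<k. stepsize \<delta> T i * l i))
    \<le> 8 * C * (d0 * l 0 * (1 / (\<delta> * ln (real T) * ln (real k + 3) * sqrt (real k + 1))))
      + 2 / (\<delta>\<^sup>2 * (ln (real T))\<^sup>2) * ((l k + 2 * p2 * d0) / (sqrt (real k + 1) * ln (real k + 3)) *
          (\<Sum>i=1..k. l (i - 1) / (ln (real i + 2) * sqrt (real i))))"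
proof -
  define S where "S = (\<Sum>i=1..k. l (i - 1) / (ln (real i + 2) * sqrt (real i)))"
  define e where "e = stepsize \<delta> T k"
  have lT: "0 < ln (real T)" using assms(2) by simp
  have lk: "0 < ln (real k + 3)" by simp
  have sk: "0 < sqrt (real k + 1)" by simp
  have e0: "0 < e" unfolding e_def using stepsize_pos assms(1,2) by blast
  have ee: "e = 1 / (\<delta> * ln (real T) * ln (real k + 3) * sqrt (real k + 1))"
    unfolding e_def stepsize_def ..
  have t1: "e * (2 * C * a * l 0 * d0) \<le> 8 * C * (d0 * l 0 * e)"
  proof -
    have p: "0 \<le> l 0 * d0" using assms by simp
    have "a * (l 0 * d0) \<le> 1 * (l 0 * d0)"
      using assms p by (intro mult_right_mono) auto
    then have q: "a * (l 0 * d0) \<le> 4 * (l 0 * d0)" using p by linarith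
    have "(2 * C) * (a * (l 0 * d0)) \<le> (2 * C) * (4 * (l 0 * d0))"
      using q assms(5) by (intro mult_left_mono) auto
    then have "2 * C * a * l 0 * d0 \<le> 8 * C * (d0 * l 0)"
      by (simp add: algebra_simps)
    then have "e * (2 * C * a * l 0 * d0) \<le> e * (8 * C * (d0 * l 0))"
      using e0 by (intro mult_left_mono) auto
    then show ?thesis by (simp add: mult_ac)
  qed
  have t2: "e * ((2 * l k + 4 * p2 * d0) * (1 / (\<delta> * ln (real T)) * S)) =
     2 / (\<delta>\<^sup>2 * (ln (real T))\<^sup>2) * ((l k + 2 * p2 * d0) / (sqrt (real k + 1) * ln (real k + 3)) * S)"
    unfolding ee using assms(1) lT lk sk by (simp add: field_simps power2_eq_square)
  show ?thesis
    unfolding eta_sum1 S_def[symmetric] e_def[symmetric] ee[symmetric]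
    using t1 t2 by (simp add: distrib_left)
qed

lemma grp2:
  fixes l :: "nat \<Rightarrow> real"
  assumes "0 < \<delta>" "2 \<le> T" "\<And>i. 0 \<le> l i" "0 \<le> dj" "0 \<le> a" "a \<le> 1 / sqrt (real t)" "0 \<le> p2" "j \<le> k"
  shows "stepsize \<delta> T k * (2 * a * l j * dj + (2 * l k + 4 * p2 * dj) * (\<Sum>i=j..<k. stepsize \<delta> T i * l i))
    \<le> 8 * (dj * l j / (\<delta> * ln (real T) * ln (real k + 3) * sqrt (real k + 1) * sqrt (real t)))
      + 2 / (\<delta>\<^sup>2 * (ln (real T))\<^sup>2) * ((l k + 2 * p2 * dj) / (ln (real k + 3) * ln (real j + 3) * sqrt (real k + 1)) *
          (\<Sum>i=Suc j..k. l (i - 1) / sqrt (real i)))"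
proof -
  define S where "S = (\<Sum>i=Suc j..k. l (i - 1) / sqrt (real i))"
  define e where "e = stepsize \<delta> T k"
  have lT: "0 < ln (real T)" using assms(2) by simp
  have lk: "0 < ln (real k + 3)" by simp
  have lj: "0 < ln (real j + 3)" by simp
  have sk: "0 < sqrt (real k + 1)" by simp
  have e0: "0 < e" unfolding e_def using stepsize_pos assms(1,2) by blast
  have ee: "e = 1 / (\<delta> * ln (real T) * ln (real k + 3) * sqrt (real k + 1))"
    unfolding e_def stepsize_def ..
  have S0: "0 \<le> S" unfolding S_def using assms(3) by (intro sum_nonneg divide_nonneg_nonneg) auto
  have SS: "(\<Sum>i=j..<k. stepsize \<delta> T i * l i) \<le> 1 / (\<delta> * ln (real T) * ln (real j + 3)) * S"
  proof -
    have "(\<Sum>i=j..<k. stepsize \<delta> T i * l i) \<le> (\<Sum>i=j..<k. 1 / (\<delta> * ln (real T) * ln (real j + 3)) * (l i / sqrt (real i + 1)))"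
    proof (rule sum_mono)
      fix i assume "i \<in> {j..<k}"
      then have ij: "ln (real j + 3) \<le> ln (real i + 3)" by simp
      have "stepsize \<delta> T i * l i = l i / (\<delta> * ln (real T) * ln (real i + 3) * sqrt (real i + 1))"
        unfolding stepsize_def by simp
      also have "\<dots> \<le> l i / (\<delta> * ln (real T) * ln (real j + 3) * sqrt (real i + 1))"
        using assms(1,3) lT lj ij by (intro divide_left_mono mult_right_mono mult_left_mono mult_pos_pos) auto
      also have "\<dots> = 1 / (\<delta> * ln (real T) * ln (real j + 3)) * (l i / sqrt (real i + 1))" by simp
      finally show "stepsize \<delta> T i * l i \<le> 1 / (\<delta> * ln (real T) * ln (real j + 3)) * (l i / sqrt (real i + 1))" .
    qed
    also have "\<dots> = 1 / (\<delta> * ln (real T) * ln (real j + 3)) * S"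
      unfolding S_def sum_shift_Suc by (simp add: sum_distrib_left add.commute)
    finally show ?thesis .
  qed
  have t1: "e * (2 * a * l j * dj) \<le> 8 * (dj * l j / (\<delta> * ln (real T) * ln (real k + 3) * sqrt (real k + 1) * sqrt (real t)))"
  proof -
    have p: "0 \<le> 1 / sqrt (real t) * (l j * dj)" using assms by simp
    have "a * (l j * dj) \<le> 1 / sqrt (real t) * (l j * dj)"
      using assms by (intro mult_right_mono) auto
    then have "2 * (a * (l j * dj)) \<le> 8 * (1 / sqrt (real t) * (l j * dj))" using p by linarith
    then have "2 * a * l j * dj \<le> 8 * (1 / sqrt (real t) * (l j * dj))" by (simp add: mult_ac)
    then have "e * (2 * a * l j * dj) \<le> e * (8 * (1 / sqrt (real t) * (l j * dj)))"
      using e0 by (intro mult_left_mono) auto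
    also have "\<dots> = 8 * (dj * l j / (\<delta> * ln (real T) * ln (real k + 3) * sqrt (real k + 1) * sqrt (real t)))"
      unfolding ee by (simp add: field_simps)
    finally show ?thesis .
  qed
  have X0: "0 \<le> 2 * l k + 4 * p2 * dj" using assms by simp
  have t2: "e * ((2 * l k + 4 * p2 * dj) * (\<Sum>i=j..<k. stepsize \<delta> T i * l i)) \<le>
      e * ((2 * l k + 4 * p2 * dj) * (1 / (\<delta> * ln (real T) * ln (real j + 3)) * S))"
    using SS X0 e0 by (intro mult_left_mono) auto
  have t3: "e * ((2 * l k + 4 * p2 * dj) * (1 / (\<delta> * ln (real T) * ln (real j + 3)) * S)) =
     2 / (\<delta>\<^sup>2 * (ln (real T))\<^sup>2) * ((l k + 2 * p2 * dj) / (ln (real k + 3) * ln (real j + 3) * sqrt (real k + 1)) * S)"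
    unfolding ee using assms(1) lT lk sk lj by (simp add: field_simps power2_eq_square)
  show ?thesis
    unfolding S_def[symmetric] e_def[symmetric]
    using t1 t2 t3 by (simp add: distrib_left)
qed

lemma mix_u_bound:
  assumes "0 < C" "0 < \<alpha>" "\<alpha> < 1" "1 \<le> t"
  shows "C * \<alpha> ^ mix_u C \<alpha> t \<le> 1 / sqrt (real t)"
proof -
  define x where "x = ln (C * sqrt (real t)) / ln (1 / \<alpha>)"
  define u where "u = mix_u C \<alpha> t"
  have st: "0 < sqrt (real t)" using assms by simp
  have au: "\<alpha> ^ u \<le> 1" using assms by (simp add: power_le_one)
  show ?thesis
  proof (cases "C * sqrt (real t) \<le> 1")
    case True
    have "C * \<alpha> ^ u \<le> C" using au assms(1) by (simp add: mult_left_le)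
    also have "\<dots> \<le> 1 / sqrt (real t)" using True st by (simp add: field_simps)
    finally show ?thesis unfolding u_def .
  next
    case False
    have xu: "x \<le> real u"
      unfolding u_def mix_u_def x_def[symmetric] by linarith
    have la: "ln (1 / \<alpha>) = - ln \<alpha>" using assms by (simp add: ln_div)
    have x2: "x = - log \<alpha> (C * sqrt (real t))" unfolding x_def la log_def by simp
    have "\<alpha> ^ u = \<alpha> powr real u" using assms by (simp add: powr_realpow)
    also have "\<dots> \<le> \<alpha> powr x" using xu assms by (intro powr_mono') auto
    also have "\<dots> = 1 / (C * sqrt (real t))"
      unfolding x2 powr_minus_divide using assms st by simp
    finally have "C * \<alpha> ^ u \<le> C * (1 / (C * sqrt (real t)))" using assms(1) by (intro mult_left_mono) auto
    then show ?thesis unfolding u_def using assms(1) by simp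
  qed
qed




theorem lemmaB1:
  fixes P :: "'s::finite \<Rightarrow> 's \<Rightarrow> real" and \<pi> \<mu>0 :: "'s \<Rightarrow> real"
    and C \<alpha> r_inf \<gamma> phi_inf \<delta> :: real and r :: "'s \<Rightarrow> 's \<Rightarrow> real"
    and \<phi> :: "'s \<Rightarrow> 'v::euclidean_space" and \<theta>s :: 'v and T t :: nat
  assumes "stochastic P" and "irreducible_chain P" and "aperiodic_chain P"
    and "stationary_dist P \<pi>"
    and "C > 0" and "0 < \<alpha>" and "\<alpha> < 1"
    and "\<forall>s n. tv_dist (mpow P n s) \<pi> \<le> C * \<alpha> ^ n"
    and "\<forall>s s'. 0 \<le> r s s' \<and> r s s' \<le> r_inf"
    and "0 < \<gamma>" and "\<gamma> < 1"
    and "\<forall>s. norm (\<phi> s) \<le> phi_inf"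
    and "td_gbar \<pi> P r \<gamma> \<phi> \<theta>s = 0"
    and "\<forall>s. 0 \<le> \<mu>0 s" and "(\<Sum>s\<in>UNIV. \<mu>0 s) = 1"
    and "\<delta> > 0" and "T \<ge> 2" and "1 \<le> t" and "t \<le> T"
  defines "u \<equiv> mix_u C \<alpha> t"
    and "\<theta> \<equiv> (\<lambda>\<omega> k. td_theta r \<gamma> \<phi> (stepsize \<delta> T) \<omega> k)"
    and "d \<equiv> (\<lambda>\<omega> k. norm (td_theta r \<gamma> \<phi> (stepsize \<delta> T) \<omega> k - \<theta>s))"
    and "ell \<equiv> (\<lambda>\<omega> k. r_inf * phi_inf + 2 * phi_inf\<^sup>2 * norm (td_theta r \<gamma> \<phi> (stepsize \<delta> T) \<omega> k))"
    and "b \<equiv> (\<lambda>\<omega> k. td_bias \<mu>0 P \<pi> r \<gamma> \<phi> (stepsize \<delta> T) \<omega> k)"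
    and "E \<equiv> traj_exp \<mu>0 P (t + mix_u C \<alpha> t)"
  shows "E (\<lambda>\<omega>. \<Sum>k<t. stepsize \<delta> T k * (b \<omega> k \<bullet> (\<theta> \<omega> k - \<theta>s)))
      \<le> 8 * C * E (\<lambda>\<omega>. d \<omega> 0 * ell \<omega> 0 *
              (\<Sum>k=0..u. 1 / (\<delta> * ln (real T) * ln (real k + 3) * sqrt (real k + 1))))
        + 8 * E (\<lambda>\<omega>. \<Sum>k=u+1..t-1. d \<omega> (k - u) * ell \<omega> (k - u) /
              (\<delta> * ln (real T) * ln (real k + 3) * sqrt (real k + 1) * sqrt (real t)))
        + 2 / (\<delta>\<^sup>2 * (ln (real T))\<^sup>2) * E (\<lambda>\<omega>. \<Sum>k=0..u.
              (ell \<omega> k + 2 * phi_inf\<^sup>2 * d \<omega> 0) / (sqrt (real k + 1) * ln (real k + 3)) *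
              (\<Sum>i=1..k. ell \<omega> (i - 1) / (ln (real i + 2) * sqrt (real i))))
        + 2 / (\<delta>\<^sup>2 * (ln (real T))\<^sup>2) * E (\<lambda>\<omega>. \<Sum>k=u+1..t-1.
              (ell \<omega> k + 2 * phi_inf\<^sup>2 * d \<omega> (k - u)) /
                (ln (real k + 3) * ln (real (k - u) + 3) * sqrt (real k + 1)) *
              (\<Sum>i=k-u+1..k. ell \<omega> (i - 1) / sqrt (real i)))"
proof -
  interpret tdset P \<pi> r \<gamma> r_inf phi_inf C \<alpha> \<phi>
    using assms(1,4,8,9,10,11,12) by unfold_locales auto
  define \<eta> where "\<eta> = stepsize \<delta> T"
  have eta: "\<And>i. 0 \<le> \<eta> i" unfolding \<eta>_def using stepsize_pos assms(16,17) less_imp_le by blast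
  have mu: "\<forall>s. 0 \<le> \<mu>0 s" "(\<Sum>s\<in>UNIV. \<mu>0 s) = 1" using assms by auto
  define N where "N = t + u"
  have EN: "E = traj_exp \<mu>0 P N" unfolding E_def N_def u_def ..
  define c2 where "c2 = 2 / (\<delta>\<^sup>2 * (ln (real T))\<^sup>2)"
  have ellL: "ell \<omega> k = L (th \<eta> \<omega> k)" for \<omega> k unfolding ell_def L_def \<eta>_def ..
  have dd: "d \<omega> k = norm (th \<eta> \<omega> k - \<theta>s)" for \<omega> k unfolding d_def \<eta>_def ..
  have thth: "\<theta> \<omega> k = th \<eta> \<omega> k" for \<omega> k unfolding \<theta>_def \<eta>_def ..
  have bb: "b \<omega> k = td_bias \<mu>0 P \<pi> r \<gamma> \<phi> \<eta> \<omega> k" for \<omega> k unfolding b_def \<eta>_def ..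
  have ell0: "0 \<le> ell \<omega> k" for \<omega> k unfolding ellL by (rule L_nn)
  have d0: "0 \<le> d \<omega> k" for \<omega> k unfolding dd by simp
  have lT: "0 < ln (real T)" using assms(17) by simp
  have c20: "0 \<le> c2" unfolding c2_def by simp
  define R1 where "R1 = (\<lambda>\<omega> k. 8 * C * (d \<omega> 0 * ell \<omega> 0 * (1 / (\<delta> * ln (real T) * ln (real k + 3) * sqrt (real k + 1))))
      + c2 * ((ell \<omega> k + 2 * phi_inf\<^sup>2 * d \<omega> 0) / (sqrt (real k + 1) * ln (real k + 3)) *
          (\<Sum>i=1..k. ell \<omega> (i - 1) / (ln (real i + 2) * sqrt (real i)))))"
  define R2 where "R2 = (\<lambda>\<omega> k. 8 * (d \<omega> (k - u) * ell \<omega> (k - u) /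
              (\<delta> * ln (real T) * ln (real k + 3) * sqrt (real k + 1) * sqrt (real t)))
      + c2 * ((ell \<omega> k + 2 * phi_inf\<^sup>2 * d \<omega> (k - u)) /
                (ln (real k + 3) * ln (real (k - u) + 3) * sqrt (real k + 1)) *
              (\<Sum>i=k-u+1..k. ell \<omega> (i - 1) / sqrt (real i))))"
  define R where "R = (\<lambda>\<omega> k. if k \<le> u then R1 \<omega> k else R2 \<omega> k)"
  have perk: "E (\<lambda>\<omega>. stepsize \<delta> T k * (b \<omega> k \<bullet> (\<theta> \<omega> k - \<theta>s))) \<le> E (\<lambda>\<omega>. R \<omega> k)" if kt: "k < t" for k
  proof (cases "k \<le> u")
    case True
    have kN: "k \<le> N" using kt unfolding N_def by simp
    have "E (\<lambda>\<omega>. stepsize \<delta> T k * (b \<omega> k \<bullet> (\<theta> \<omega> k - \<theta>s))) \<le>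
      E (\<lambda>\<omega>. \<eta> k * (2 * C * \<alpha> ^ (k - 0) * L (th \<eta> \<omega> 0) * norm (th \<eta> \<omega> 0 - \<theta>s)
          + (2 * L (th \<eta> \<omega> k) + 4 * phi_inf\<^sup>2 * norm (th \<eta> \<omega> 0 - \<theta>s)) * (\<Sum>i=0..<k. \<eta> i * L (th \<eta> \<omega> i))))"
      unfolding EN bb thth \<eta>_def[symmetric]
      by (rule per_k[OF eta mu]) (use kN in auto)
    also have "\<dots> \<le> E (\<lambda>\<omega>. R \<omega> k)"
      unfolding EN
    proof (rule traj_exp_mono[OF stoch mu(1)])
      fix \<omega>
      have "stepsize \<delta> T k * (2 * C * \<alpha> ^ k * ell \<omega> 0 * d \<omega> 0 + (2 * ell \<omega> k + 4 * phi_inf\<^sup>2 * d \<omega> 0) *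
              (\<Sum>i=0..<k. stepsize \<delta> T i * ell \<omega> i)) \<le> R1 \<omega> k"
        unfolding R1_def c2_def
        by (rule grp1) (use assms ell0 d0 in \<open>auto simp: power_le_one\<close>)
      then show "\<eta> k * (2 * C * \<alpha> ^ (k - 0) * L (th \<eta> \<omega> 0) * norm (th \<eta> \<omega> 0 - \<theta>s)
          + (2 * L (th \<eta> \<omega> k) + 4 * phi_inf\<^sup>2 * norm (th \<eta> \<omega> 0 - \<theta>s)) * (\<Sum>i=0..<k. \<eta> i * L (th \<eta> \<omega> i)))
          \<le> R \<omega> k"
        unfolding R_def using True by (simp add: ellL dd \<eta>_def)
    qed
    finally show ?thesis .
  next
    case False
    have kN: "k \<le> N" using kt unfolding N_def by simp
    have ku: "k - (k - u) = u" using False by simp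
    have "E (\<lambda>\<omega>. stepsize \<delta> T k * (b \<omega> k \<bullet> (\<theta> \<omega> k - \<theta>s))) \<le>
      E (\<lambda>\<omega>. \<eta> k * (2 * C * \<alpha> ^ (k - (k - u)) * L (th \<eta> \<omega> (k - u)) * norm (th \<eta> \<omega> (k - u) - \<theta>s)
          + (2 * L (th \<eta> \<omega> k) + 4 * phi_inf\<^sup>2 * norm (th \<eta> \<omega> (k - u) - \<theta>s)) * (\<Sum>i=k-u..<k. \<eta> i * L (th \<eta> \<omega> i))))"
      unfolding EN bb thth \<eta>_def[symmetric]
      by (rule per_k[OF eta mu]) (use kN False in auto)
    also have "\<dots> \<le> E (\<lambda>\<omega>. R \<omega> k)"
      unfolding EN
    proof (rule traj_exp_mono[OF stoch mu(1)])
      fix \<omega>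
      have Cu: "C * \<alpha> ^ u \<le> 1 / sqrt (real t)"
        unfolding u_def by (rule mix_u_bound) (use assms in auto)
      have "stepsize \<delta> T k * (2 * (C * \<alpha> ^ u) * ell \<omega> (k - u) * d \<omega> (k - u) + (2 * ell \<omega> k + 4 * phi_inf\<^sup>2 * d \<omega> (k - u)) *
              (\<Sum>i=k-u..<k. stepsize \<delta> T i * ell \<omega> i)) \<le> R2 \<omega> k"
        unfolding R2_def c2_def Suc_eq_plus1[symmetric]
        by (rule grp2) (use assms ell0 d0 Cu in \<open>auto\<close>)
      then show "\<eta> k * (2 * C * \<alpha> ^ (k - (k - u)) * L (th \<eta> \<omega> (k - u)) * norm (th \<eta> \<omega> (k - u) - \<theta>s)
          + (2 * L (th \<eta> \<omega> k) + 4 * phi_inf\<^sup>2 * norm (th \<eta> \<omega> (k - u) - \<theta>s)) * (\<Sum>i=k-u..<k. \<eta> i * L (th \<eta> \<omega> i)))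
          \<le> R \<omega> k"
        unfolding R_def ku using False by (simp add: ellL dd \<eta>_def mult.assoc)
    qed
    finally show ?thesis .
  qed
  define A where "A = (\<lambda>\<omega>. d \<omega> 0 * ell \<omega> 0 *
              (\<Sum>k=0..u. 1 / (\<delta> * ln (real T) * ln (real k + 3) * sqrt (real k + 1))))"
  define B where "B = (\<lambda>\<omega>. \<Sum>k=u+1..t-1. d \<omega> (k - u) * ell \<omega> (k - u) /
              (\<delta> * ln (real T) * ln (real k + 3) * sqrt (real k + 1) * sqrt (real t)))"
  define Cc where "Cc = (\<lambda>\<omega>. \<Sum>k=0..u.
              (ell \<omega> k + 2 * phi_inf\<^sup>2 * d \<omega> 0) / (sqrt (real k + 1) * ln (real k + 3)) *
              (\<Sum>i=1..k. ell \<omega> (i - 1) / (ln (real i + 2) * sqrt (real i))))"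
  define D where "D = (\<lambda>\<omega>. \<Sum>k=u+1..t-1.
              (ell \<omega> k + 2 * phi_inf\<^sup>2 * d \<omega> (k - u)) /
                (ln (real k + 3) * ln (real (k - u) + 3) * sqrt (real k + 1)) *
              (\<Sum>i=k-u+1..k. ell \<omega> (i - 1) / sqrt (real i)))"
  have pw: "(\<Sum>k<t. R \<omega> k) \<le> 8 * C * A \<omega> + 8 * B \<omega> + c2 * Cc \<omega> + c2 * D \<omega>" for \<omega>
  proof -
    have split: "(\<Sum>k<t. R \<omega> k) = (\<Sum>k\<in>{..<t} \<inter> {k. k \<le> u}. R1 \<omega> k) + (\<Sum>k\<in>{..<t} \<inter> - {k. k \<le> u}. R2 \<omega> k)"
      unfolding R_def by (rule sum.If_cases) simp
    have s1: "{..<t} \<inter> - {k. k \<le> u} = {u+1..t-1}" using assms(18) by auto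
    have R1nn: "0 \<le> R1 \<omega> k" for k
      unfolding R1_def using assms(5,16) lT ell0 d0 c20
      by (intro add_nonneg_nonneg mult_nonneg_nonneg divide_nonneg_nonneg sum_nonneg) auto
    have m1: "(\<Sum>k\<in>{..<t} \<inter> {k. k \<le> u}. R1 \<omega> k) \<le> (\<Sum>k=0..u. R1 \<omega> k)"
      by (rule sum_mono2) (auto simp: R1nn)
    have e1: "(\<Sum>k=0..u. R1 \<omega> k) = 8 * C * A \<omega> + c2 * Cc \<omega>"
      unfolding R1_def A_def Cc_def by (simp add: sum.distrib sum_distrib_left)
    have e2: "(\<Sum>k=u+1..t-1. R2 \<omega> k) = 8 * B \<omega> + c2 * D \<omega>"
      unfolding R2_def B_def D_def by (simp add: sum.distrib sum_distrib_left)
    show ?thesis unfolding split s1 e2 using m1 e1 by linarith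
  qed
  have "E (\<lambda>\<omega>. \<Sum>k<t. stepsize \<delta> T k * (b \<omega> k \<bullet> (\<theta> \<omega> k - \<theta>s))) =
      (\<Sum>k<t. E (\<lambda>\<omega>. stepsize \<delta> T k * (b \<omega> k \<bullet> (\<theta> \<omega> k - \<theta>s))))"
    unfolding EN by (rule traj_exp_sum) simp
  also have "\<dots> \<le> (\<Sum>k<t. E (\<lambda>\<omega>. R \<omega> k))"
    by (rule sum_mono) (rule perk, simp)
  also have "\<dots> = E (\<lambda>\<omega>. \<Sum>k<t. R \<omega> k)"
    unfolding EN by (rule traj_exp_sum[symmetric]) simp
  also have "\<dots> \<le> E (\<lambda>\<omega>. 8 * C * A \<omega> + 8 * B \<omega> + c2 * Cc \<omega> + c2 * D \<omega>)"
    unfolding EN by (rule traj_exp_mono[OF stoch mu(1) pw])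
  also have "\<dots> = 8 * C * E A + 8 * E B + c2 * E Cc + c2 * E D"
    unfolding EN traj_exp_add traj_exp_cmult[where c = "8 * C"] traj_exp_cmult[where c = 8] traj_exp_cmult[where c = c2] by simp
  finally show ?thesis unfolding A_def B_def Cc_def D_def c2_def .
qed



end
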